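(* Consider an $m$-partial SCS with schedule $(f,g)$ at time $t$, and let $\sigma$ be a simple path in a ring, starting at the position at time $t$ of one robot and ending at the position at time $t$ of another robot of the same ring. Let $A_1,\dots,A_s$ be the directed circle arcs traversed by $\sigma$ in order, following the travel direction of the ring, let $C_j$ denote the circle containing $A_j$ (the $C_j$ need not be distinct), let $t_i$ be the time required by a robot to traverse $A_i$, and let $\theta_j$ be the angular position in $C_j$ of the second endpoint of $A_j$. Then for all $1\le j\le s$, $$f(C_j)+g(C_j)\cdot 2\pi\cdot\Big(t+\sum_{i=1}^{j}t_i\Big)=\theta_j \pmod{2\pi}.$$
   Context: Let $T$ be a set of pairwise disjoint unit circles in the plane (trajectories) and $\epsilon<0.5$ a communication range; the graph of potential links $G_\epsilon(T)$ has the circle centers as nodes and an edge $\{i,j\}$ whenever the centers are at distance at most $2+\epsilon$; it is assumed connected. Points of a circle are identified with angles (modulo $2\pi$), and a robot traverses a circle (length $2\pi$) in one time unit. A schedule is a pair $(f,g)$, $f:T\to[0,2\pi)$, $g:T\to\{-1,1\}$ ($1$ = counterclockwise); the robot on $C$ is at angle $f(C)+2\pi g(C)t$ at time $t$. A communication graph $G=(V,E)$ is a connected spanning subgraph of $G_\epsilon(T)$. The link position $\phi_{ij}$ is the point of $C_i$ closest to $C_j$. A schedule is $G$-synchronized if for every $\{i,j\}\in E$ the robot on $C_i$ is at $\phi_{ij}$ exactly when the robot on $C_j$ is at $\phi_{ji}$. An SCS with communication graph $G$ consists of one robot per circle moving under a $G$-synchronized schedule with $g(C_i)=-g(C_j)$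 for all $\{i,j\}\in E$. Shifting protocol: when a robot on $C_i$ reaches $\phi_{ij}$ and there is no robot at $\phi_{ji}$, it moves to $C_j$ and thereafter follows the schedule of $C_j$. An $m$-partial SCS is obtained by removing all but $m$ robots, the remaining ones applying the shifting protocol. A ring is the closed path traversed by a robot that follows the assigned direction on each circle and always shifts to the neighboring circle at link positions. A path in a ring follows the travel direction of the ring; it is simple if it contains no full tour of the ring. *)

theory Defs
  imports "HOL-Analysis.Analysis"
begin

text \<open>Circles are unit circles identified with their centers (complex numbers).
  A point of circle C is given by an angle \<theta>, i.e. the point C + cis \<theta>.\<close>

definition ang_eq :: "real \<Rightarrow> real \<Rightarrow> bool" where
  "ang_eq x y \<longleftrightarrow> (\<exists>k::int. x - y = 2 * pi * of_int k)"

definition disjoint_unit_circles :: "complex set \<Rightarrow> bool" where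
  "disjoint_unit_circles T \<longleftrightarrow> (\<forall>a\<in>T. \<forall>b\<in>T. a \<noteq> b \<longrightarrow> cmod (a - b) > 2)"

definition pot_links :: "real \<Rightarrow> complex set \<Rightarrow> (complex \<times> complex) set" where
  "pot_links eps T = {(a, b). a \<in> T \<and> b \<in> T \<and> a \<noteq> b \<and> cmod (a - b) \<le> 2 + eps}"

definition graph_connected :: "complex set \<Rightarrow> (complex \<times> complex) set \<Rightarrow> bool" where
  "graph_connected V E \<longleftrightarrow> (\<forall>a\<in>V. \<forall>b\<in>V. (a, b) \<in> (E \<inter> (V \<times> V))\<^sup>*)"

definition comm_graph :: "real \<Rightarrow> complex set \<Rightarrow> (complex \<times> complex) set \<Rightarrow> bool" where
  "comm_graph eps T E \<longleftrightarrow> E \<subseteq> pot_links eps T \<and> sym E \<and> graph_connected T E"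

text \<open>Link position phi_ij: angle of the point of circle C_i closest to C_j.\<close>
definition link_pos :: "complex \<Rightarrow> complex \<Rightarrow> real" where
  "link_pos ci cj = Arg (cj - ci)"

text \<open>Schedule: f gives initial angle in [0,2pi), g the direction (1 = ccw, -1 = cw).\<close>
definition schedule :: "complex set \<Rightarrow> (complex \<Rightarrow> real) \<Rightarrow> (complex \<Rightarrow> real) \<Rightarrow> bool" where
  "schedule T f g \<longleftrightarrow> (\<forall>C\<in>T. 0 \<le> f C \<and> f C < 2 * pi \<and> (g C = 1 \<or> g C = -1))"

definition sched_pos :: "(complex \<Rightarrow> real) \<Rightarrow> (complex \<Rightarrow> real) \<Rightarrow> complex \<Rightarrow> real \<Rightarrow> real" where
  "sched_pos f g C t = f C + g C * 2 * pi * t"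

definition synchronized :: "(complex \<times> complex) set \<Rightarrow> (complex \<Rightarrow> real) \<Rightarrow> (complex \<Rightarrow> real) \<Rightarrow> bool" where
  "synchronized E f g \<longleftrightarrow>
     (\<forall>(a, b)\<in>E. \<forall>t::real. ang_eq (sched_pos f g a t) (link_pos a b)
                           \<longleftrightarrow> ang_eq (sched_pos f g b t) (link_pos b a))"

definition SCS :: "real \<Rightarrow> complex set \<Rightarrow> (complex \<times> complex) set \<Rightarrow> (complex \<Rightarrow> real) \<Rightarrow> (complex \<Rightarrow> real) \<Rightarrow> bool" where
  "SCS eps T E f g \<longleftrightarrow>
     finite T \<and> T \<noteq> {} \<and> disjoint_unit_circles T \<and> eps < 1/2 \<and>
     graph_connected T (pot_links eps T) \<and> comm_graph eps T E \<and>
     schedule T f g \<and> synchronized E f g \<and> (\<forall>(a, b)\<in>E. g a = - g b)"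

text \<open>Configuration of an m-partial SCS: R is the set of circles currently carrying a robot
  (at most one robot per circle); the robot on C is at angle sched_pos f g C t at time t
  (a robot always follows the schedule of the circle it is on).\<close>
definition partial_config :: "complex set \<Rightarrow> nat \<Rightarrow> complex set \<Rightarrow> bool" where
  "partial_config T m R \<longleftrightarrow> R \<subseteq> T \<and> card R = m"

text \<open>A path in a ring, given by s arcs (indices 1..s): arc j lies on circle Cs j, starts at
  angle \<alpha> j, takes time \<tau> j to traverse in the direction g (Cs j), and ends at angle \<theta> j.\<close>
definition ring_path ::
  "(complex \<times> complex) set \<Rightarrow> (complex \<Rightarrow> real) \<Rightarrow> (complex \<Rightarrow> real) \<Rightarrow> complex set \<Rightarrow> nat \<Rightarrow>
   (nat \<Rightarrow> complex) \<Rightarrow> (nat \<Rightarrow> real) \<Rightarrow> (nat \<Rightarrow> real) \<Rightarrow> (nat \<Rightarrow> real) \<Rightarrow> bool" where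
  "ring_path E f g T s Cs \<alpha> \<tau> \<theta> \<longleftrightarrow>
     1 \<le> s \<and>
     (\<forall>j\<in>{1..s}. Cs j \<in> T \<and> 0 \<le> \<tau> j \<and> \<tau> j \<le> 1 \<and>
        ang_eq (\<theta> j) (\<alpha> j + g (Cs j) * 2 * pi * \<tau> j)) \<and>
     (\<forall>j. 1 < j \<and> j < s \<longrightarrow> 0 < \<tau> j) \<and>
     (\<forall>j\<in>{1..s}. \<forall>u. 0 < u \<and> u < \<tau> j \<longrightarrow>
        (\<forall>D. (Cs j, D) \<in> E \<longrightarrow> \<not> ang_eq (\<alpha> j + g (Cs j) * 2 * pi * u) (link_pos (Cs j) D))) \<and>
     (\<forall>j. 1 \<le> j \<and> j < s \<longrightarrow>
        (Cs j, Cs (Suc j)) \<in> E \<and> ang_eq (\<theta> j) (link_pos (Cs j) (Cs (Suc j))) \<and>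
        ang_eq (\<alpha> (Suc j)) (link_pos (Cs (Suc j)) (Cs j)))"

definition simple_path ::
  "(complex \<Rightarrow> real) \<Rightarrow> nat \<Rightarrow> (nat \<Rightarrow> complex) \<Rightarrow> (nat \<Rightarrow> real) \<Rightarrow> (nat \<Rightarrow> real) \<Rightarrow> bool" where
  "simple_path g s Cs \<alpha> \<tau> \<longleftrightarrow>
     (\<forall>j\<in>{1..s}. \<forall>k\<in>{1..s}. \<forall>u v. 0 \<le> u \<and> u < \<tau> j \<and> 0 \<le> v \<and> v < \<tau> k \<and> (j, u) \<noteq> (k, v) \<longrightarrow>
        \<not> (Cs j = Cs k \<and> ang_eq (\<alpha> j + g (Cs j) * 2 * pi * u) (\<alpha> k + g (Cs k) * 2 * pi * v)))"

end

theory Submission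
  imports Defs
begin

lemma ang_eq_refl: "ang_eq x x"
  unfolding ang_eq_def by (rule exI[of _ 0]) simp

lemma ang_eq_sym: "ang_eq x y \<Longrightarrow> ang_eq y x"
  unfolding ang_eq_def
  by (metis minus_diff_eq mult_minus_right of_int_minus)

lemma ang_eq_trans: "ang_eq x y \<Longrightarrow> ang_eq y z \<Longrightarrow> ang_eq x z"
proof -
  assume "ang_eq x y" "ang_eq y z"
  then obtain k l :: int where "x - y = 2 * pi * of_int k" "y - z = 2 * pi * of_int l"
    unfolding ang_eq_def by blast
  then have "x - z = 2 * pi * of_int (k+l)" by (simp add: algebra_simps)
  then show ?thesis unfolding ang_eq_def by blast
qed

lemma ang_eq_add: "ang_eq x y \<Longrightarrow> ang_eq (x + c) (y + c)"
  unfolding ang_eq_def by simp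

theorem proposition1:
  fixes eps :: real and T :: "complex set" and E :: "(complex \<times> complex) set"
    and f g :: "complex \<Rightarrow> real" and m :: nat and R :: "complex set" and t :: real
    and s :: nat and Cs :: "nat \<Rightarrow> complex" and \<alpha> \<tau> \<theta> :: "nat \<Rightarrow> real"
  assumes scs: "SCS eps T E f g"
    and conf: "partial_config T m R"
    and path: "ring_path E f g T s Cs \<alpha> \<tau> \<theta>"
    and simple: "simple_path g s Cs \<alpha> \<tau>"
    and start: "Cs 1 \<in> R" "ang_eq (\<alpha> 1) (sched_pos f g (Cs 1) t)"
    and finish: "Cs s \<in> R" "ang_eq (\<theta> s) (sched_pos f g (Cs s) t)"
    and other: "Cs s \<noteq> Cs 1"
  shows "\<forall>j\<in>{1..s}. ang_eq (f (Cs j) + g (Cs j) * 2 * pi * (t + (\<Sum>i=1..j. \<tau> i))) (\<theta> j)"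
proof -
  have sync: "synchronized E f g" using scs unfolding SCS_def by blast
  have arc: "\<And>j. j \<in> {1..s} \<Longrightarrow> ang_eq (\<theta> j) (\<alpha> j + g (Cs j) * 2 * pi * \<tau> j)"
    using path unfolding ring_path_def by blast
  have lnk: "\<And>j. 1 \<le> j \<Longrightarrow> j < s \<Longrightarrow> (Cs j, Cs (Suc j)) \<in> E \<and> ang_eq (\<theta> j) (link_pos (Cs j) (Cs (Suc j))) \<and>
        ang_eq (\<alpha> (Suc j)) (link_pos (Cs (Suc j)) (Cs j))"
    using path unfolding ring_path_def by blast
  have main: "1 \<le> j \<longrightarrow> j \<le> s \<longrightarrow> ang_eq (sched_pos f g (Cs j) (t + (\<Sum>i=1..j. \<tau> i))) (\<theta> j)" for j
  proof (induction j)
    case 0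
    then show ?case by simp
  next
    case (Suc j)
    show ?case
    proof (intro impI)
      assume a: "1 \<le> Suc j" "Suc j \<le> s"
      show "ang_eq (sched_pos f g (Cs (Suc j)) (t + (\<Sum>i=1..Suc j. \<tau> i))) (\<theta> (Suc j))"
      proof (cases "j = 0")
        case True
        have "ang_eq (\<theta> 1) (\<alpha> 1 + g (Cs 1) * 2 * pi * \<tau> 1)" using arc a by simp
        moreover have "ang_eq (\<alpha> 1 + g (Cs 1) * 2 * pi * \<tau> 1)
             (sched_pos f g (Cs 1) t + g (Cs 1) * 2 * pi * \<tau> 1)"
          using ang_eq_add[OF start(2)] by blast
        ultimately have "ang_eq (\<theta> 1) (sched_pos f g (Cs 1) (t + \<tau> 1))"
          using ang_eq_trans unfolding sched_pos_def by (simp add: algebra_simps)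
        then show ?thesis using True by (simp add: ang_eq_sym)
      next
        case False
        define T' where "T' = t + (\<Sum>i=1..j. \<tau> i)"
        have IH: "ang_eq (sched_pos f g (Cs j) T') (\<theta> j)" using Suc.IH False a T'_def by simp
        have l: "(Cs j, Cs (Suc j)) \<in> E" "ang_eq (\<theta> j) (link_pos (Cs j) (Cs (Suc j)))"
          "ang_eq (\<alpha> (Suc j)) (link_pos (Cs (Suc j)) (Cs j))" using lnk[of j] False a by auto
        have "ang_eq (sched_pos f g (Cs j) T') (link_pos (Cs j) (Cs (Suc j)))"
          using IH l(2) ang_eq_trans by blast
        then have "ang_eq (sched_pos f g (Cs (Suc j)) T') (link_pos (Cs (Suc j)) (Cs j))"
          using sync l(1) unfolding synchronized_def by fast
        then have s1: "ang_eq (sched_pos f g (Cs (Suc j)) T') (\<alpha> (Suc j))"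
          using l(3) ang_eq_trans ang_eq_sym by blast
        have s2: "ang_eq (sched_pos f g (Cs (Suc j)) T' + g (Cs (Suc j)) * 2 * pi * \<tau> (Suc j))
            (\<alpha> (Suc j) + g (Cs (Suc j)) * 2 * pi * \<tau> (Suc j))" using ang_eq_add[OF s1] .
        have s3: "ang_eq (\<alpha> (Suc j) + g (Cs (Suc j)) * 2 * pi * \<tau> (Suc j)) (\<theta> (Suc j))"
          using arc[of "Suc j"] a ang_eq_sym by simp
        have eq: "sched_pos f g (Cs (Suc j)) (t + (\<Sum>i=1..Suc j. \<tau> i)) =
            sched_pos f g (Cs (Suc j)) T' + g (Cs (Suc j)) * 2 * pi * \<tau> (Suc j)"
          unfolding sched_pos_def T'_def by (simp add: algebra_simps)
        show ?thesis unfolding eq using s2 s3 ang_eq_trans by blast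
      qed
    qed
  qed
  show ?thesis using main unfolding sched_pos_def by auto
qed

end
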